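(* Let $f:\mathbb R^n\to\mathbb R$ be a lower-$\mathcal C^2$ function. Then the following are equivalent: (i) $f$ is convex on $\mathbb R^n$; (ii) for every $(u,v)\in\operatorname{gph}\partial f$, $\langle z,w\rangle\ge0$ whenever $w\in\mathbb R^n$ and $z\in\partial^2 f(u,v)(w)$; (iii) for every $(u,v)\in\operatorname{gph}\partial f$, $\langle z,w\rangle\ge0$ whenever $w\in\mathbb R^n$ and $z\in\breve\partial^2 f(u,v)(w)$.
   Context: $f:\mathbb R^n\to\mathbb R$ is lower-$\mathcal C^2$ if for each $\bar x$ there are a neighborhood $V$ of $\bar x$, a compact set $T$, and functions $f_t$ ($t\in T$) of class $\mathcal C^2$ on $V$ such that $f(x)=\max_{t\in T}f_t(x)$ for $x\in V$, with $f_t(x)$ and all partial derivatives in $x$ up to order 2 depending continuously on $(t,x)\in T\times V$. Regular subdifferential: $\widehat\partial f(\bar u)=\{v:\liminf_{u\to\bar u}\frac{f(u)-f(\bar u)-\langle v,u-\bar u\rangle}{\|u-\bar u\|}\ge0\}$. Limiting subdifferential: $v\in\partial f(\bar u)$ iff there are $u_k\to\bar u$ with $f(u_k)\to f(\bar u)$ and $v_k\in\widehat\partial f(u_k)$ with $v_k\to v$. Regular normal cone to $\Omega\subset\mathbb R^n\times\mathbb R^n$: $\widehat N(\bar p;\Omega)=\{q:\limsup_{p\to\bar p,\,p\in\Omega}\langle q,p-\bar p\rangle/\|p-\bar p\|\le0\}$. For $F:\mathbb R^n\rightrightarrows\mathbb R^n$, regular coderivative $\widehat D^*F(u,v)(w)=\{z:(z,-w)\in\widehat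 N((u,v);\operatorname{gph}F)\}$, and limiting coderivative $z\in D^*F(\bar u,\bar v)(w)$ iff there are $(u_k,v_k)\in\operatorname{gph}F$, $(u_k,v_k)\to(\bar u,\bar v)$, $w_k\to w$, $z_k\to z$ with $z_k\in\widehat D^*F(u_k,v_k)(w_k)$. Second-order subdifferentials for $v\in\partial f(u)$: $\partial^2f(u,v)(w)=D^*(\partial f)(u,v)(w)$ (limiting) and $\breve\partial^2f(u,v)(w)=\widehat D^*(\partial f)(u,v)(w)$ (combined). *)

theory Defs
  imports "HOL-Analysis.Analysis"
begin

type_synonym 'n vec = "real ^ 'n"

definition lower_C2 :: "'t::topological_space itself \<Rightarrow> ('n::finite vec \<Rightarrow> real) \<Rightarrow> bool" where
  "lower_C2 _ f \<longleftrightarrow>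
    (\<forall>xb. \<exists>V (T::'t set) ft g H.
        open V \<and> xb \<in> V \<and> compact T \<and> T \<noteq> {} \<and>
        (\<forall>t\<in>T. \<forall>x\<in>V. (ft t has_derivative (\<lambda>h. g t x \<bullet> h)) (at x)
                       \<and> (g t has_derivative H t x) (at x)) \<and>
        continuous_on (T \<times> V) (\<lambda>(t,x). ft t x) \<and>
        continuous_on (T \<times> V) (\<lambda>(t,x). g t x) \<and>
        (\<forall>h. continuous_on (T \<times> V) (\<lambda>(t,x). H t x h)) \<and>
        (\<forall>x\<in>V. (\<forall>t\<in>T. ft t x \<le> f x) \<and> (\<exists>t\<in>T. ft t x = f x)))"

text \<open>Regular subdifferential: liminf_{u -> ub} (f u - f ub - <v,u-ub>)/|u-ub| \<ge> 0.\<close>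
definition reg_subdiff :: "('n::finite vec \<Rightarrow> real) \<Rightarrow> 'n vec \<Rightarrow> 'n vec set" where
  "reg_subdiff f ub = {v. \<forall>e>0. \<forall>\<^sub>F u in at ub.
      f u - f ub - v \<bullet> (u - ub) \<ge> - e * norm (u - ub)}"

definition lim_subdiff :: "('n::finite vec \<Rightarrow> real) \<Rightarrow> 'n vec \<Rightarrow> 'n vec set" where
  "lim_subdiff f ub = {v. \<exists>u vs. u \<longlonglongrightarrow> ub \<and> (\<lambda>k. f (u k)) \<longlonglongrightarrow> f ub \<and>
      vs \<longlonglongrightarrow> v \<and> (\<forall>k. vs k \<in> reg_subdiff f (u k))}"

text \<open>Regular normal cone: limsup_{p -> pb, p in Omega} <q,p-pb>/|p-pb| \<le> 0.\<close>
definition reg_normal :: "('n::finite vec \<times> 'n vec) \<Rightarrow> ('n vec \<times> 'n vec) set \<Rightarrow> ('n vec \<times> 'n vec) set" where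
  "reg_normal pb \<Omega> = {q. \<forall>e>0. \<forall>\<^sub>F p in at pb within \<Omega>.
      q \<bullet> (p - pb) \<le> e * norm (p - pb)}"

definition gph :: "('n::finite vec \<Rightarrow> 'n vec set) \<Rightarrow> ('n vec \<times> 'n vec) set" where
  "gph F = {(u, v). v \<in> F u}"

definition reg_coderiv :: "('n::finite vec \<Rightarrow> 'n vec set) \<Rightarrow> 'n vec \<Rightarrow> 'n vec \<Rightarrow> 'n vec \<Rightarrow> 'n vec set" where
  "reg_coderiv F u v w = {z. (z, - w) \<in> reg_normal (u, v) (gph F)}"

definition lim_coderiv :: "('n::finite vec \<Rightarrow> 'n vec set) \<Rightarrow> 'n vec \<Rightarrow> 'n vec \<Rightarrow> 'n vec \<Rightarrow> 'n vec set" where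
  "lim_coderiv F ub vb w = {z. \<exists>u v ws zs. (\<forall>k. (u k, v k) \<in> gph F) \<and>
      u \<longlonglongrightarrow> ub \<and> v \<longlonglongrightarrow> vb \<and> ws \<longlonglongrightarrow> w \<and> zs \<longlonglongrightarrow> z \<and>
      (\<forall>k. zs k \<in> reg_coderiv F (u k) (v k) (ws k))}"

definition second_subdiff :: "('n::finite vec \<Rightarrow> real) \<Rightarrow> 'n vec \<Rightarrow> 'n vec \<Rightarrow> 'n vec \<Rightarrow> 'n vec set" where
  "second_subdiff f u v w = lim_coderiv (lim_subdiff f) u v w"

definition combined_second_subdiff :: "('n::finite vec \<Rightarrow> real) \<Rightarrow> 'n vec \<Rightarrow> 'n vec \<Rightarrow> 'n vec \<Rightarrow> 'n vec set" where
  "combined_second_subdiff f u v w = reg_coderiv (lim_subdiff f) u v w"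

end

theory Submission
  imports Defs
begin


lemma ge_eps_le:
  fixes a b c :: real
  assumes "c \<ge> 0" "\<And>e. e > 0 \<Longrightarrow> a \<ge> b - e * c"
  shows "a \<ge> b"
proof (rule ccontr)
  assume "\<not> a \<ge> b"
  define e where "e = (b - a) / (2 * (c + 1))"
  have "e > 0" using \<open>\<not> a \<ge> b\<close> assms(1) by (simp add: e_def)
  have "e * c < b - a"
  proof -
    have "e * c \<le> e * (c+1)" using \<open>e>0\<close> by simp
    also have "\<dots> = (b - a)/2" using assms(1) by (simp add: e_def field_simps)
    finally show ?thesis using \<open>\<not> a \<ge> b\<close> by simp
  qed
  with assms(2)[OF \<open>e>0\<close>] show False by simp
qed

lemma conv_regsub:
  fixes h :: "'n::finite vec \<Rightarrow> real"
  assumes cv: "convex_on B h" and u: "u \<in> B" and x: "x \<in> B" and v: "v \<in> reg_subdiff h u"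
  shows "h x \<ge> h u + v \<bullet> (x - u)"
proof (cases "x = u")
  case True then show ?thesis by simp
next
  case False
  hence nx: "norm (x - u) > 0" by simp
  show ?thesis
  proof (rule ge_eps_le[where c = "norm (x - u)"])
    fix e :: real assume e: "e > 0"
    from v e have "\<forall>\<^sub>F y in at u. h y - h u - v \<bullet> (y - u) \<ge> - e * norm (y - u)"
      by (simp add: reg_subdiff_def)
    then obtain d where d: "d > 0" and dd: "\<And>y. y \<noteq> u \<Longrightarrow> dist y u < d \<Longrightarrow> h y - h u - v \<bullet> (y - u) \<ge> - e * norm (y - u)"
      unfolding eventually_at by auto
    define s where "s = min (1/2) (d / (2 * norm (x - u)))"
    have s0: "s > 0" using d nx by (simp add: s_def)
    have s1: "s \<le> 1" by (simp add: s_def)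
    define y where "y = (1 - s) *\<^sub>R u + s *\<^sub>R x"
    have yu: "y - u = s *\<^sub>R (x - u)" by (simp add: y_def algebra_simps)
    have "y \<noteq> u" using yu s0 False by auto
    moreover have "dist y u < d"
    proof -
      have "dist y u = s * norm (x - u)" using yu s0 by (simp add: dist_norm)
      also have "\<dots> \<le> (d / (2 * norm (x - u))) * norm (x - u)"
        using nx by (intro mult_right_mono) (auto simp: s_def)
      also have "\<dots> = d/2" using nx by simp
      finally show ?thesis using d by simp
    qed
    ultimately have 1: "h y - h u - v \<bullet> (y - u) \<ge> - e * norm (y - u)" by (rule dd)
    have 2: "h y \<le> (1 - s) * h u + s * h x" unfolding y_def
      using convex_onD[OF cv _ s1 u x] s0 by simp
    have n: "norm (y - u) = s * norm (x - u)" using yu s0 by simp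
    have "v \<bullet> (y - u) = s * (v \<bullet> (x - u))" using yu by simp
    hence "s * (h x - h u) \<ge> s * (v \<bullet> (x - u) - e * norm (x - u))"
      using 1 2 n by (simp add: algebra_simps)
    hence "h x - h u \<ge> v \<bullet> (x - u) - e * norm (x - u)"
      using s0 by (simp add: mult_le_cancel_left)
    thus "h x \<ge> h u + v \<bullet> (x - u) - e * norm (x - u)" by simp
  qed simp
qed




lemma reg_in_lim: "v \<in> reg_subdiff f u \<Longrightarrow> v \<in> lim_subdiff f u"
  unfolding lim_subdiff_def by (rule CollectI, rule exI[of _ "\<lambda>k. u"], rule exI[of _ "\<lambda>k. v"]) auto

lemma conv_limsub:
  fixes f :: "'n::finite vec \<Rightarrow> real"
  assumes cv: "convex_on UNIV f" and v: "v \<in> lim_subdiff f u"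
  shows "f x \<ge> f u + v \<bullet> (x - u)"
proof -
  from v obtain us vs where us: "us \<longlonglongrightarrow> u" and fu: "(\<lambda>k. f (us k)) \<longlonglongrightarrow> f u"
    and vs: "vs \<longlonglongrightarrow> v" and r: "\<And>k. vs k \<in> reg_subdiff f (us k)"
    unfolding lim_subdiff_def by blast
  have "\<And>k. f x \<ge> f (us k) + vs k \<bullet> (x - us k)"
    using conv_regsub[OF cv _ _ r] by simp
  moreover have "(\<lambda>k. f (us k) + vs k \<bullet> (x - us k)) \<longlonglongrightarrow> f u + v \<bullet> (x - u)"
    by (intro tendsto_intros fu vs us)
  ultimately show ?thesis
    by (intro tendsto_le[OF trivial_limit_sequentially tendsto_const]) auto
qed

lemma sq_expand:
  fixes x y p :: "'a::real_inner"
  shows "(norm (y - x))^2 = (norm (y - p))^2 + 2 * ((y - p) \<bullet> (p - x)) + (norm (p - x))^2"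
proof -
  have "y - x = (y - p) + (p - x)" by simp
  hence "(norm (y - x))^2 = ((y - p) + (p - x)) \<bullet> ((y - p) + (p - x))"
    by (metis power2_norm_eq_inner)
  also have "\<dots> = (norm (y - p))^2 + 2 * ((y - p) \<bullet> (p - x)) + (norm (p - x))^2"
    by (simp only: inner_add_left inner_add_right power2_norm_eq_inner inner_commute[of "p - x" "y - p"])
  finally show ?thesis .
qed

lemma conv_prox:
  fixes f :: "'n::finite vec \<Rightarrow> real"
  assumes cv: "convex_on UNIV f" and vb: "vb \<in> lim_subdiff f ub"
  shows "\<exists>p. x - p \<in> lim_subdiff f p"
proof -
  have cont: "continuous_on UNIV f" using convex_on_continuous[OF open_UNIV cv] .
  define F where "F y = f y + (norm (y - x))^2 / 2" for y
  define c0 where "c0 = f ub + vb \<bullet> (x - ub)"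
  define R where "R = 2 * norm vb + 2 * \<bar>f x - c0\<bar> + 2"
  have R2: "R \<ge> 2" by (simp add: R_def)
  have low: "F y > f x" if "norm (y - x) \<ge> R" for y
  proof -
    have "f y \<ge> f ub + vb \<bullet> (y - ub)" by (rule conv_limsub[OF cv vb])
    moreover have "vb \<bullet> (y - ub) = vb \<bullet> (x - ub) + vb \<bullet> (y - x)" by (simp add: inner_diff_right)
    moreover have "vb \<bullet> (y - x) \<ge> - norm vb * norm (y - x)"
      using Cauchy_Schwarz_ineq2[of vb "y - x"] by (simp add: abs_le_iff)
    ultimately have 1: "F y \<ge> c0 - norm vb * norm (y - x) + (norm (y - x))^2/2"
      unfolding F_def c0_def by simp
    have a1: "norm (y - x) * (norm (y - x) / 2 - norm vb) \<ge> R * (R/2 - norm vb)"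
      using that R2 by (intro mult_mono) (auto simp: R_def)
    have a2: "R * (R/2 - norm vb) \<ge> 2 * (\<bar>f x - c0\<bar> + 1)"
      using R2 by (intro mult_mono) (auto simp: R_def field_simps)
    have a3: "f x - c0 < 2 * (\<bar>f x - c0\<bar> + 1)" by (smt (verit) abs_ge_self)
    have "norm (y - x) * (norm (y - x) / 2 - norm vb) > f x - c0"
      using a1 a2 a3 by (meson order_less_le_trans)
    with 1 show ?thesis by (simp add: power2_eq_square algebra_simps)
  qed
  have cF: "continuous_on (cball x R) F" unfolding F_def
    by (intro continuous_intros continuous_on_subset[OF cont]) auto
  obtain p where p: "p \<in> cball x R" and pmin: "\<And>y. y \<in> cball x R \<Longrightarrow> F p \<le> F y"
    using continuous_attains_inf[OF compact_cball _ cF] R2 by fastforce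
  have "F p \<le> F x" using pmin R2 by simp
  hence "F p \<le> f x" by (simp add: F_def)
  hence pin: "norm (p - x) < R" using low by (meson not_le)
  have "x - p \<in> reg_subdiff f p"
    unfolding reg_subdiff_def
  proof (intro CollectI allI impI)
    fix e :: real assume e: "e > 0"
    show "\<forall>\<^sub>F y in at p. f y - f p - (x - p) \<bullet> (y - p) \<ge> - e * norm (y - p)"
      unfolding eventually_at
    proof (intro exI[of _ "min (R - norm (p - x)) (2 * e)"] conjI ballI impI)
      show "min (R - norm (p - x)) (2 * e) > 0" using pin e by simp
      fix y assume y: "y \<noteq> p \<and> dist y p < min (R - norm (p - x)) (2 * e)"
      have "norm (y - x) \<le> norm (y - p) + norm (p - x)"
        using norm_triangle_ineq[of "y - p" "p - x"] by simp
      hence "y \<in> cball x R" using y by (simp add: dist_norm norm_minus_commute)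
      hence "F p \<le> F y" by (rule pmin)
      hence 1: "f y - f p - (x - p) \<bullet> (y - p) + (norm (y - p))^2 / 2 \<ge> 0"
        unfolding F_def using sq_expand[of y x p]
        by (simp add: inner_commute inner_minus_right algebra_simps norm_minus_commute)
      have "(norm (y - p))^2 / 2 \<le> e * norm (y - p)"
        using y by (simp add: power2_eq_square dist_norm mult_right_mono)
      with 1 show "f y - f p - (x - p) \<bullet> (y - p) \<ge> - e * norm (y - p)" by linarith
    qed
  qed
  thus ?thesis using reg_in_lim by blast
qed




lemma conv_mono:
  fixes f :: "'n::finite vec \<Rightarrow> real"
  assumes cv: "convex_on UNIV f" and "v1 \<in> lim_subdiff f u1" "v2 \<in> lim_subdiff f u2"
  shows "(u1 - u2) \<bullet> (v1 - v2) \<ge> 0"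
proof -
  have "f u2 \<ge> f u1 + v1 \<bullet> (u2 - u1)" "f u1 \<ge> f u2 + v2 \<bullet> (u1 - u2)"
    using conv_limsub[OF cv assms(2)] conv_limsub[OF cv assms(3)] by auto
  thus ?thesis by (simp add: inner_diff_left inner_diff_right inner_commute algebra_simps)
qed

lemma norm_le_from_inner:
  fixes a c :: "'a::real_inner"
  assumes "(norm a)^2 \<le> a \<bullet> c" shows "norm a \<le> norm c"
proof (cases "norm a = 0")
  case True then show ?thesis by simp
next
  case False
  have "(norm a)^2 \<le> norm a * norm c" using assms Cauchy_Schwarz_ineq2[of a c] by linarith
  with False show ?thesis by (simp add: power2_eq_square)
qed

lemma conv_psd:
  fixes f :: "'n::finite vec \<Rightarrow> real"
  assumes cv: "convex_on UNIV f" and v: "v \<in> lim_subdiff f u"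
    and z: "z \<in> reg_coderiv (lim_subdiff f) u v w"
  shows "z \<bullet> w \<ge> 0"
proof (rule ccontr)
  assume neg: "\<not> z \<bullet> w \<ge> 0"
  define d where "d = z - w"
  define c where "c = norm (z + w)"
  have "(norm d)^2 = (norm z)^2 + (norm w)^2 - 2 * (z \<bullet> w)"
    unfolding d_def power2_norm_eq_inner by (simp add: inner_diff_left inner_diff_right inner_commute)
  moreover have "c^2 = (norm z)^2 + (norm w)^2 + 2 * (z \<bullet> w)"
    unfolding c_def power2_norm_eq_inner by (simp add: inner_add_left inner_add_right inner_commute)
  ultimately have "c^2 < (norm d)^2" using neg by simp
  hence dc: "c < norm d" by (rule power2_less_imp_less) simp
  have c0: "c \<ge> 0" by (simp add: c_def)
  define e where "e = (norm d - c) / 8"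
  have e0: "e > 0" using dc by (simp add: e_def)
  from z have "(z, - w) \<in> reg_normal (u, v) (gph (lim_subdiff f))"
    by (simp add: reg_coderiv_def)
  with e0 have "\<forall>\<^sub>F p in at (u, v) within gph (lim_subdiff f).
      (z, - w) \<bullet> (p - (u, v)) \<le> e * norm (p - (u, v))"
    by (simp add: reg_normal_def)
  then obtain \<delta> where \<delta>: "\<delta> > 0" and dd: "\<And>p. p \<in> gph (lim_subdiff f) \<Longrightarrow> p \<noteq> (u, v) \<Longrightarrow>
      dist p (u, v) < \<delta> \<Longrightarrow> (z, - w) \<bullet> (p - (u, v)) \<le> e * norm (p - (u, v))"
    unfolding eventually_at by blast
  have nd: "norm d > 0" using dc c0 by linarith
  define t where "t = \<delta> / (4 * norm d)"
  have t0: "t > 0" using \<delta> nd by (simp add: t_def)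
  define x where "x = u + v + t *\<^sub>R d"
  obtain p0 where p0: "x - p0 \<in> lim_subdiff f p0" using conv_prox[OF cv v] by blast
  define a where "a = p0 - u"
  define b where "b = x - p0 - v"
  have ab: "a + b = t *\<^sub>R d" by (simp add: a_def b_def x_def)
  have abm: "a \<bullet> b \<ge> 0"
    using conv_mono[OF cv p0 v] by (simp add: a_def b_def)
  have na: "norm a \<le> t * norm d"
  proof -
    have "(norm a)^2 \<le> a \<bullet> (a + b)" using abm by (simp add: inner_add_right power2_norm_eq_inner)
    hence "norm a \<le> norm (a + b)" by (rule norm_le_from_inner)
    thus ?thesis using ab t0 by simp
  qed
  have nb: "norm b \<le> t * norm d"
  proof -
    have "(norm b)^2 \<le> b \<bullet> (a + b)" using abm by (simp add: inner_add_right power2_norm_eq_inner inner_commute)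
    hence "norm b \<le> norm (a + b)" by (rule norm_le_from_inner)
    thus ?thesis using ab t0 by simp
  qed
  define p where "p = (p0, x - p0)"
  have pd: "p - (u, v) = (a, b)" by (simp add: p_def a_def b_def)
  have np: "norm (a, b) \<le> 2 * t * norm d" using norm_Pair_le[of a b] na nb by linarith
  have "2 * t * norm d = \<delta> / 2" using nd by (simp add: t_def)
  hence dist: "dist p (u, v) < \<delta>" using np pd \<delta> by (simp add: dist_norm)
  have pG: "p \<in> gph (lim_subdiff f)" using p0 by (simp add: p_def gph_def)
  have pne: "p \<noteq> (u, v)"
  proof
    assume "p = (u, v)"
    hence "a = 0" "b = 0" using pd by (metis Pair_inject zero_prod_def right_minus_eq)+
    hence "t *\<^sub>R d = 0" using ab by simp
    thus False using t0 nd by simp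
  qed
  from dd[OF pG pne dist] pd have up: "z \<bullet> a - w \<bullet> b \<le> e * norm (a, b)" by simp
  have up2: "z \<bullet> a - w \<bullet> b \<le> e * (2 * t * norm d)" using up np e0
    by (meson mult_left_mono order_trans less_imp_le)
  define q where "q = a - (t/2) *\<^sub>R d"
  have bq: "b = t *\<^sub>R d - a" using ab by (simp add: algebra_simps)
  have "(norm q)^2 = (norm a)^2 - t * (a \<bullet> d) + (t^2/4) * (norm d)^2"
    unfolding q_def power2_norm_eq_inner by (simp add: inner_diff_left inner_diff_right inner_commute power2_eq_square algebra_simps)
  moreover have "a \<bullet> b = t * (a \<bullet> d) - (norm a)^2"
    unfolding bq by (simp add: inner_diff_right power2_norm_eq_inner)
  moreover have "(t * norm d / 2)^2 = (t^2/4)*(norm d)^2" by (simp add: power_mult_distrib power_divide)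
  ultimately have "(norm q)^2 \<le> (t * norm d / 2)^2" using abm by linarith
  moreover have "t * norm d / 2 \<ge> 0" using t0 nd by simp
  ultimately have nq: "norm q \<le> t * norm d / 2"
    by (rule power2_le_imp_le)
  have "z \<bullet> a - w \<bullet> b = (z + w) \<bullet> a - t * (w \<bullet> d)"
    unfolding bq by (simp add: inner_add_left inner_diff_right)
  also have "(z + w) \<bullet> a = (t/2) * ((z + w) \<bullet> d) + (z + w) \<bullet> q"
    unfolding q_def by (simp add: inner_diff_right)
  finally have eq: "z \<bullet> a - w \<bullet> b = (t/2) * ((z + w) \<bullet> d) + (z + w) \<bullet> q - t * (w \<bullet> d)" .
  have "(z + w) \<bullet> q \<ge> - (c * (t * norm d / 2))"
  proof -
    have "\<bar>(z + w) \<bullet> q\<bar> \<le> c * norm q" unfolding c_def by (rule Cauchy_Schwarz_ineq2)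
    also have "\<dots> \<le> c * (t * norm d / 2)" using nq c0 by (rule mult_left_mono)
    finally show ?thesis by linarith
  qed
  moreover have "(t/2) * ((z + w) \<bullet> d) - t * (w \<bullet> d) = (t/2) * (norm d)^2"
    unfolding d_def power2_norm_eq_inner by (simp add: inner_add_left inner_diff_left inner_diff_right inner_commute algebra_simps)
  ultimately have low: "z \<bullet> a - w \<bullet> b \<ge> (t/2) * (norm d)^2 - c * (t * norm d / 2)"
    using eq by linarith
  have "(t/2) * (norm d)^2 - c * (t * norm d / 2) = (t * norm d / 2) * (norm d - c)"
    by (simp add: power2_eq_square field_simps)
  moreover have "e * (2 * t * norm d) = (t * norm d / 2) * ((norm d - c) / 2)"
    unfolding e_def by (simp add: field_simps)
  ultimately have "(t * norm d / 2) * (norm d - c) \<le> (t * norm d / 2) * ((norm d - c) / 2)"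
    using low up2 by linarith
  moreover have "t * norm d / 2 > 0" using t0 nd by simp
  ultimately have "norm d - c \<le> (norm d - c) / 2" using mult_le_cancel_left_pos by blast
  thus False using dc by simp
qed




lemma conv_psd_lim:
  fixes f :: "'n::finite vec \<Rightarrow> real"
  assumes cv: "convex_on UNIV f" and z: "z \<in> second_subdiff f u v w"
  shows "z \<bullet> w \<ge> 0"
proof -
  from z obtain us vs ws zs where g: "\<And>k. (us k, vs k) \<in> gph (lim_subdiff f)"
    and ws: "ws \<longlonglongrightarrow> w" and zs: "zs \<longlonglongrightarrow> z"
    and r: "\<And>k. zs k \<in> reg_coderiv (lim_subdiff f) (us k) (vs k) (ws k)"
    unfolding second_subdiff_def lim_coderiv_def by blast
  have "\<And>k. zs k \<bullet> ws k \<ge> 0"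
    using conv_psd[OF cv _ r] g by (simp add: gph_def)
  moreover have "(\<lambda>k. zs k \<bullet> ws k) \<longlonglongrightarrow> z \<bullet> w" by (intro tendsto_intros zs ws)
  ultimately show ?thesis
    by (intro tendsto_le[OF trivial_limit_sequentially _ tendsto_const]) auto
qed

lemma comb_in_second:
  assumes "v \<in> lim_subdiff f u" "z \<in> combined_second_subdiff f u v w"
  shows "z \<in> second_subdiff f u v w"
  using assms unfolding second_subdiff_def combined_second_subdiff_def lim_coderiv_def
  by (intro CollectI exI[of _ "\<lambda>k. u"] exI[of _ "\<lambda>k. v"] exI[of _ "\<lambda>k. w"] exI[of _ "\<lambda>k. z"])
     (auto simp: gph_def)

lemma cpt_bound:
  fixes F :: "'k::topological_space \<Rightarrow> 'b::real_normed_vector"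
  assumes "compact K" "continuous_on K F"
  shows "\<exists>B. \<forall>k\<in>K. norm (F k) \<le> B"
proof -
  have "bounded (F ` K)" by (intro compact_imp_bounded compact_continuous_image assms)
  then show ?thesis unfolding bounded_pos by auto
qed

lemma lin_bound:
  fixes Hf :: "'k::topological_space \<Rightarrow> 'a::euclidean_space \<Rightarrow> 'b::real_normed_vector"
  assumes K: "compact K" and c: "\<And>h. continuous_on K (\<lambda>k. Hf k h)" and l: "\<And>k. k \<in> K \<Longrightarrow> linear (Hf k)"
  shows "\<exists>B\<ge>0. \<forall>k\<in>K. \<forall>h. norm (Hf k h) \<le> B * norm h"
proof -
  have "\<forall>i\<in>Basis. \<exists>B. \<forall>k\<in>K. norm (Hf k i) \<le> B" using cpt_bound[OF K c] by blast
  then obtain M where M: "\<And>i k. i \<in> Basis \<Longrightarrow> k \<in> K \<Longrightarrow> norm (Hf k i) \<le> M i" by metis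
  define B where "B = (\<Sum>i\<in>Basis. max 0 (M i))"
  have "B \<ge> 0" unfolding B_def by (intro sum_nonneg) auto
  moreover have "norm (Hf k h) \<le> B * norm h" if k: "k \<in> K" for k h
  proof -
    have "Hf k h = Hf k (\<Sum>i\<in>Basis. (h \<bullet> i) *\<^sub>R i)" by (simp add: euclidean_representation)
    also have "\<dots> = (\<Sum>i\<in>Basis. (h \<bullet> i) *\<^sub>R Hf k i)"
      using l[OF k] by (simp add: linear_sum linear_scale)
    finally have "norm (Hf k h) \<le> (\<Sum>i\<in>Basis. norm ((h \<bullet> i) *\<^sub>R Hf k i))"
      by (metis norm_sum)
    also have "\<dots> \<le> (\<Sum>i\<in>Basis. norm h * max 0 (M i))"
    proof (intro sum_mono)
      fix i :: 'a assume i: "i \<in> Basis"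
      have "norm ((h \<bullet> i) *\<^sub>R Hf k i) = \<bar>h \<bullet> i\<bar> * norm (Hf k i)" by simp
      also have "\<dots> \<le> norm h * max 0 (M i)"
        using Basis_le_norm[OF i, of h] M[OF i k] by (intro mult_mono) auto
      finally show "norm ((h \<bullet> i) *\<^sub>R Hf k i) \<le> norm h * max 0 (M i)" .
    qed
    also have "\<dots> = B * norm h" by (simp add: B_def sum_distrib_left mult.commute)
    finally show ?thesis .
  qed
  ultimately show ?thesis by blast
qed




lemma sq_id:
  fixes x w :: "'a::real_inner"
  shows "(norm x)^2 - (norm w)^2 - 2 * (w \<bullet> (x - w)) = (norm (x - w))^2"
  unfolding power2_norm_eq_inner by (simp add: inner_diff_left inner_diff_right inner_commute)

context
  fixes f :: "'n::finite vec \<Rightarrow> real" and ft :: "'t \<Rightarrow> 'n vec \<Rightarrow> real"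
    and g :: "'t \<Rightarrow> 'n vec \<Rightarrow> 'n vec" and H :: "'t \<Rightarrow> 'n vec \<Rightarrow> 'n vec \<Rightarrow> 'n vec"
    and T :: "'t set" and xb :: "'n vec" and r Gm Hm :: real
  assumes r0: "r > 0"
  and der: "\<And>t x. t \<in> T \<Longrightarrow> x \<in> cball xb r \<Longrightarrow>
     (ft t has_derivative (\<lambda>h. g t x \<bullet> h)) (at x) \<and> (g t has_derivative H t x) (at x)"
  and gb: "\<And>t x. t \<in> T \<Longrightarrow> x \<in> cball xb r \<Longrightarrow> norm (g t x) \<le> Gm"
  and hb: "\<And>t x h. t \<in> T \<Longrightarrow> x \<in> cball xb r \<Longrightarrow> norm (H t x h) \<le> Hm * norm h"
  and mx: "\<And>x. x \<in> cball xb r \<Longrightarrow> (\<forall>t\<in>T. ft t x \<le> f x) \<and> (\<exists>t\<in>T. ft t x = f x)"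
  and Hm0: "Hm \<ge> 0"
begin

lemma Gm0: "Gm \<ge> 0"
proof -
  obtain t where "t \<in> T" using mx[of xb] r0 by auto
  hence "norm (g t xb) \<le> Gm" using gb[of t xb] r0 by simp
  thus ?thesis using norm_ge_zero[of "g t xb"] by linarith
qed

lemma glip:
  assumes t: "t \<in> T" and x: "x \<in> cball xb r" and y: "y \<in> cball xb r"
  shows "norm (g t x - g t y) \<le> Hm * norm (x - y)"
proof (rule differentiable_bound[OF convex_cball, where f="g t" and f'="H t"])
  fix z assume z: "z \<in> cball xb r"
  show "(g t has_derivative H t z) (at z within cball xb r)"
    using der[OF t z] by (blast intro: has_derivative_at_withinI)
  show "onorm (H t z) \<le> Hm" by (rule onorm_le) (rule hb[OF t z])
qed (use x y in auto)

lemma flip: "t \<in> T \<Longrightarrow> x \<in> cball xb r \<Longrightarrow> y \<in> cball xb r \<Longrightarrow> \<bar>ft t x - ft t y\<bar> \<le> Gm * norm (x - y)"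
proof -
  assume t: "t \<in> T" and x: "x \<in> cball xb r" and y: "y \<in> cball xb r"
  have "norm (ft t x - ft t y) \<le> Gm * norm (x - y)"
  proof (rule differentiable_bound[OF convex_cball, where f="ft t" and f'="\<lambda>z h. g t z \<bullet> h"])
    fix z assume z: "z \<in> cball xb r"
    show "(ft t has_derivative (\<lambda>h. g t z \<bullet> h)) (at z within cball xb r)"
      using der[OF t z] by (auto intro: has_derivative_at_withinI)
    show "onorm (\<lambda>h. g t z \<bullet> h) \<le> Gm"
    proof (rule onorm_le)
      fix h show "norm (g t z \<bullet> h) \<le> Gm * norm h"
        using Cauchy_Schwarz_ineq2[of "g t z" h] gb[OF t z] by (simp add: mult_right_mono order_trans)
    qed
  qed (use x y in auto)
  thus ?thesis by simp
qed

lemma fquad: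
  assumes t: "t \<in> T" and u: "u \<in> cball xb r" and x: "x \<in> cball xb r"
  shows "\<bar>ft t x - ft t u - g t u \<bullet> (x - u)\<bar> \<le> Hm * (norm (x - u))^2"
proof -
  have seg: "closed_segment u x \<subseteq> cball xb r"
    using u x by (simp add: closed_segment_subset convex_cball)
  have "norm ((\<lambda>y. ft t y - g t u \<bullet> y) x - (\<lambda>y. ft t y - g t u \<bullet> y) u) \<le> (Hm * norm (x - u)) * norm (x - u)"
  proof (rule differentiable_bound[OF convex_closed_segment, where f' = "\<lambda>z h. g t z \<bullet> h - g t u \<bullet> h"])
    fix z assume z: "z \<in> closed_segment u x"
    hence zc: "z \<in> cball xb r" using seg by auto
    show "((\<lambda>y. ft t y - g t u \<bullet> y) has_derivative (\<lambda>h. g t z \<bullet> h - g t u \<bullet> h)) (at z within closed_segment u x)"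
      proof -
      have d1: "(ft t has_derivative (\<lambda>h. g t z \<bullet> h)) (at z)" using der[OF t zc] by blast
      have d2: "((\<lambda>y. g t u \<bullet> y) has_derivative (\<lambda>h. g t u \<bullet> h)) (at z)"
        by (rule bounded_linear_imp_has_derivative[OF bounded_linear_inner_right])
      show ?thesis by (rule has_derivative_at_withinI[OF has_derivative_diff[OF d1 d2]])
    qed
    show "onorm (\<lambda>h. g t z \<bullet> h - g t u \<bullet> h) \<le> Hm * norm (x - u)"
    proof (rule onorm_le)
      fix h
      have "norm (g t z \<bullet> h - g t u \<bullet> h) = \<bar>(g t z - g t u) \<bullet> h\<bar>" by (simp add: inner_diff_left)
      also have "\<dots> \<le> norm (g t z - g t u) * norm h" by (rule Cauchy_Schwarz_ineq2)
      also have "\<dots> \<le> (Hm * norm (x - u)) * norm h"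
      proof (intro mult_right_mono)
        have "norm (g t z - g t u) \<le> Hm * norm (z - u)" by (rule glip[OF t zc u])
        also have "\<dots> \<le> Hm * norm (x - u)" using segment_bound1[OF z] Hm0 by (intro mult_left_mono)
        finally show "norm (g t z - g t u) \<le> Hm * norm (x - u)" .
      qed simp
      finally show "norm (g t z \<bullet> h - g t u \<bullet> h) \<le> Hm * norm (x - u) * norm h" .
    qed
  qed auto
  thus ?thesis by (simp add: inner_diff_right power2_eq_square algebra_simps)
qed

lemma f_lip:
  assumes x: "x \<in> cball xb r" and y: "y \<in> cball xb r"
  shows "\<bar>f x - f y\<bar> \<le> Gm * norm (x - y)"
proof -
  have one: "f a - f b \<le> Gm * norm (a - b)" if a: "a \<in> cball xb r" and b: "b \<in> cball xb r" for a b
  proof -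
    obtain t where t: "t \<in> T" "ft t a = f a" using mx[OF a] by auto
    have "ft t b \<le> f b" using mx[OF b] t by auto
    moreover have "ft t a - ft t b \<le> Gm * norm (a - b)" using flip[OF t(1) a b] by simp
    ultimately show ?thesis using t by simp
  qed
  show ?thesis using one[OF x y] one[OF y x] by (simp add: norm_minus_commute abs_le_iff)
qed

lemma reg_nonempty: "\<exists>v. v \<in> reg_subdiff f xb"
proof -
  have xbc: "xb \<in> cball xb r" using r0 by simp
  obtain t where t: "t \<in> T" "ft t xb = f xb" using mx[OF xbc] by auto
  have "g t xb \<in> reg_subdiff f xb" unfolding reg_subdiff_def
  proof (intro CollectI allI impI)
    fix e :: real assume e: "e > 0"
    show "\<forall>\<^sub>F y in at xb. f y - f xb - g t xb \<bullet> (y - xb) \<ge> - e * norm (y - xb)"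
      unfolding eventually_at
    proof (intro exI[of _ "min r (e / (Hm + 1))"] conjI ballI impI)
      show "min r (e / (Hm + 1)) > 0" using r0 e Hm0 by simp
      fix y assume y: "y \<noteq> xb \<and> dist y xb < min r (e / (Hm + 1))"
      hence yc: "y \<in> cball xb r" by (simp add: dist_commute)
      have 1: "ft t y \<le> f y" using mx[OF yc] t by auto
      have 2: "ft t y - ft t xb - g t xb \<bullet> (y - xb) \<ge> - (Hm * (norm (y - xb))^2)"
        using fquad[OF t(1) xbc yc] by (simp add: abs_le_iff)
      have "Hm * norm (y - xb) \<le> e"
      proof -
        have "norm (y - xb) \<le> e / (Hm + 1)" using y by (simp add: dist_norm)
        hence "(Hm + 1) * norm (y - xb) \<le> e" using Hm0 by (simp add: field_simps)
        hence "norm (y - xb) + Hm * norm (y - xb) \<le> e" by (simp add: algebra_simps)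
        thus ?thesis using norm_ge_zero[of "y - xb"] by linarith
      qed
      hence "Hm * (norm (y - xb))^2 \<le> e * norm (y - xb)"
        by (simp add: power2_eq_square mult_right_mono mult.assoc[symmetric])
      thus "f y - f xb - g t xb \<bullet> (y - xb) \<ge> - e * norm (y - xb)" using 1 2 t by linarith
    qed
  qed
  thus ?thesis by blast
qed

definition hh where "hh x = f x + Hm * (norm x)^2"

lemma hh_conv: "convex_on (cball xb r) hh"
proof (rule convex_onI[OF _ convex_cball])
  fix s :: real and x y assume s: "0 < s" "s < 1" and x: "x \<in> cball xb r" and y: "y \<in> cball xb r"
  define w where "w = (1 - s) *\<^sub>R x + s *\<^sub>R y"
  have w: "w \<in> cball xb r" unfolding w_def using convexD_alt[OF convex_cball x y, of s] s by simp
  obtain t where t: "t \<in> T" "ft t w = f w" using mx[OF w] by auto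
  define D where "D = g t w + (2 * Hm) *\<^sub>R w"
  have sup: "ft t z + Hm * (norm z)^2 \<ge> ft t w + Hm * (norm w)^2 + D \<bullet> (z - w)" if z: "z \<in> cball xb r" for z
  proof -
    have "ft t z \<ge> ft t w + g t w \<bullet> (z - w) - Hm * (norm (z - w))^2"
      using fquad[OF t(1) w z] by (simp add: abs_le_iff)
    moreover have "Hm * (norm z)^2 - Hm * (norm w)^2 - (2 * Hm) * (w \<bullet> (z - w)) = Hm * (norm (z - w))^2"
    proof -
      have "Hm * (norm z)^2 - Hm * (norm w)^2 - (2 * Hm) * (w \<bullet> (z - w)) = Hm * ((norm z)^2 - (norm w)^2 - 2 * (w \<bullet> (z - w)))"
        by (simp add: algebra_simps)
      also have "\<dots> = Hm * (norm (z - w))^2" by (simp only: sq_id)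
      finally show ?thesis .
    qed
    ultimately show ?thesis by (simp add: D_def inner_add_left algebra_simps)
  qed
  have "(1 - s) * (D \<bullet> (x - w)) + s * (D \<bullet> (y - w)) = D \<bullet> ((1 - s) *\<^sub>R (x - w) + s *\<^sub>R (y - w))"
    by (simp add: inner_add_right)
  also have "(1 - s) *\<^sub>R (x - w) + s *\<^sub>R (y - w) = 0" by (simp add: w_def algebra_simps)
  finally have lin: "(1 - s) * (D \<bullet> (x - w)) + s * (D \<bullet> (y - w)) = 0" by simp
  have hx: "hh x \<ge> ft t w + Hm * (norm w)^2 + D \<bullet> (x - w)"
  proof -
    have "ft t x \<le> f x" using mx[OF x] t(1) by blast
    thus ?thesis using sup[OF x] unfolding hh_def by linarith
  qed
  have hy: "hh y \<ge> ft t w + Hm * (norm w)^2 + D \<bullet> (y - w)"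
  proof -
    have "ft t y \<le> f y" using mx[OF y] t(1) by blast
    thus ?thesis using sup[OF y] unfolding hh_def by linarith
  qed
  have "(1 - s) * hh x + s * hh y \<ge> (1 - s) * (ft t w + Hm * (norm w)^2 + D \<bullet> (x - w)) + s * (ft t w + Hm * (norm w)^2 + D \<bullet> (y - w))"
    using hx hy s by (intro add_mono mult_left_mono) auto
  also have "(1 - s) * (ft t w + Hm * (norm w)^2 + D \<bullet> (x - w)) + s * (ft t w + Hm * (norm w)^2 + D \<bullet> (y - w)) = hh w"
  proof -
    have "(1 - s) * (ft t w + Hm * (norm w)^2 + D \<bullet> (x - w)) + s * (ft t w + Hm * (norm w)^2 + D \<bullet> (y - w))
       = (ft t w + Hm * (norm w)^2) + ((1 - s) * (D \<bullet> (x - w)) + s * (D \<bullet> (y - w)))"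
      by (simp add: algebra_simps)
    also have "\<dots> = hh w" unfolding lin using t(2) by (simp add: hh_def)
    finally show ?thesis .
  qed
  finally have "hh w \<le> (1 - s) * hh x + s * hh y" .
  from this[unfolded w_def] show "hh ((1 - s) *\<^sub>R x + s *\<^sub>R y) \<le> (1 - s) * hh x + s * hh y" .
qed


lemma reg_bound:
  assumes u: "u \<in> ball xb r" and v: "v \<in> reg_subdiff f u"
  shows "norm v \<le> Gm"
proof (cases "v = 0")
  case True thus ?thesis using Gm0 by simp
next
  case False
  hence nv: "norm v > 0" by simp
  have uc: "u \<in> cball xb r" using u by simp
  show ?thesis
  proof (rule ge_eps_le[where c = 1])
    fix e :: real assume e: "e > 0"
    from v e have "\<forall>\<^sub>F y in at u. f y - f u - v \<bullet> (y - u) \<ge> - e * norm (y - u)"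
      by (simp add: reg_subdiff_def)
    then obtain d where d: "d > 0" and dd: "\<And>y. y \<noteq> u \<Longrightarrow> dist y u < d \<Longrightarrow> f y - f u - v \<bullet> (y - u) \<ge> - e * norm (y - u)"
      unfolding eventually_at by auto
    define \<rho> where "\<rho> = r - dist xb u"
    have \<rho>: "\<rho> > 0" using u by (simp add: \<rho>_def)
    define s where "s = min (d / (2 * norm v)) (\<rho> / (2 * norm v))"
    have s0: "s > 0" using d \<rho> nv by (simp add: s_def)
    define y where "y = u + s *\<^sub>R v"
    have nyu: "norm (y - u) = s * norm v" using s0 by (simp add: y_def)
    have snv1: "s * norm v \<le> d / 2"
    proof -
      have "s * norm v \<le> (d / (2 * norm v)) * norm v" using nv by (intro mult_right_mono) (auto simp: s_def)
      thus ?thesis using nv by simp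
    qed
    have snv2: "s * norm v \<le> \<rho> / 2"
    proof -
      have "s * norm v \<le> (\<rho> / (2 * norm v)) * norm v" using nv by (intro mult_right_mono) (auto simp: s_def)
      thus ?thesis using nv by simp
    qed
    have yne: "y \<noteq> u" using s0 False by (simp add: y_def)
    have ydist: "dist y u < d" using nyu snv1 d by (simp add: dist_norm)
    have yc: "y \<in> cball xb r"
    proof -
      have "dist xb y \<le> dist xb u + dist u y" by (rule dist_triangle)
      also have "dist u y = s * norm v" using nyu by (simp add: dist_norm norm_minus_commute)
      finally show ?thesis using snv2 \<rho> by (simp add: \<rho>_def)
    qed
    have 1: "f y - f u - v \<bullet> (y - u) \<ge> - e * (s * norm v)" using dd[OF yne ydist] nyu by simp
    have 2: "f y - f u \<le> Gm * (s * norm v)" using f_lip[OF yc uc] nyu by (simp add: abs_le_iff)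
    have 3: "v \<bullet> (y - u) = s * (norm v * norm v)" by (simp add: y_def power2_norm_eq_inner[symmetric] power2_eq_square)
    have "(s * norm v) * norm v \<le> (s * norm v) * (Gm + e)" using 1 2 3 by (simp add: algebra_simps)
    hence "norm v \<le> Gm + e" using s0 nv by (simp add: mult_le_cancel_left_pos)
    thus "Gm \<ge> norm v - e * 1" by simp
  qed simp
qed

lemma reg_quad:
  assumes u: "u \<in> ball xb r" and v: "v \<in> reg_subdiff f u" and x: "x \<in> cball xb r"
  shows "f x \<ge> f u + v \<bullet> (x - u) - Hm * (norm (x - u))^2"
proof -
  have uc: "u \<in> cball xb r" using u by simp
  have v': "v + (2 * Hm) *\<^sub>R u \<in> reg_subdiff hh u" unfolding reg_subdiff_def
  proof (intro CollectI allI impI)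
    fix e :: real assume e: "e > 0"
    from v e have ev: "\<forall>\<^sub>F y in at u. f y - f u - v \<bullet> (y - u) \<ge> - e * norm (y - u)"
      by (simp add: reg_subdiff_def)
    show "\<forall>\<^sub>F y in at u. hh y - hh u - (v + (2 * Hm) *\<^sub>R u) \<bullet> (y - u) \<ge> - e * norm (y - u)"
    proof (rule eventually_mono[OF ev])
      fix y assume 1: "f y - f u - v \<bullet> (y - u) \<ge> - e * norm (y - u)"
      have "hh y - hh u - (v + (2 * Hm) *\<^sub>R u) \<bullet> (y - u)
          = (f y - f u - v \<bullet> (y - u)) + Hm * ((norm y)^2 - (norm u)^2 - 2 * (u \<bullet> (y - u)))"
        by (simp add: hh_def inner_add_left algebra_simps)
      also have "\<dots> = (f y - f u - v \<bullet> (y - u)) + Hm * (norm (y - u))^2" by (simp only: sq_id)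
      finally show "hh y - hh u - (v + (2 * Hm) *\<^sub>R u) \<bullet> (y - u) \<ge> - e * norm (y - u)"
        using 1 Hm0 by (simp add: add_increasing2)
    qed
  qed
  have "hh x \<ge> hh u + (v + (2 * Hm) *\<^sub>R u) \<bullet> (x - u)"
    by (rule conv_regsub[OF hh_conv uc x v'])
  moreover have "hh x - hh u - (v + (2 * Hm) *\<^sub>R u) \<bullet> (x - u)
          = (f x - f u - v \<bullet> (x - u)) + Hm * ((norm x)^2 - (norm u)^2 - 2 * (u \<bullet> (x - u)))"
    by (simp add: hh_def inner_add_left algebra_simps)
  moreover have "(norm x)^2 - (norm u)^2 - 2 * (u \<bullet> (x - u)) = (norm (x - u))^2" by (rule sq_id)
  ultimately show ?thesis by simp
qed

lemma lim_props:
  assumes u: "u \<in> ball xb r" and v: "v \<in> lim_subdiff f u"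
  shows "norm v \<le> Gm \<and> (\<forall>x\<in>cball xb r. f x \<ge> f u + v \<bullet> (x - u) - Hm * (norm (x - u))^2)"
proof -
  from v obtain us vs where us: "us \<longlonglongrightarrow> u" and fu: "(\<lambda>k. f (us k)) \<longlonglongrightarrow> f u"
    and vs: "vs \<longlonglongrightarrow> v" and rr: "\<And>k. vs k \<in> reg_subdiff f (us k)"
    unfolding lim_subdiff_def by blast
  have ev: "\<forall>\<^sub>F k in sequentially. us k \<in> ball xb r"
    by (rule topological_tendstoD[OF us open_ball u])
  have "norm v \<le> Gm"
  proof (rule tendsto_le[OF trivial_limit_sequentially tendsto_const])
    show "(\<lambda>k. norm (vs k)) \<longlonglongrightarrow> norm v" by (intro tendsto_intros vs)
    show "\<forall>\<^sub>F k in sequentially. norm (vs k) \<le> Gm"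
      using ev by (rule eventually_mono) (use reg_bound rr in blast)
  qed
  moreover have "f x \<ge> f u + v \<bullet> (x - u) - Hm * (norm (x - u))^2" if x: "x \<in> cball xb r" for x
  proof (rule tendsto_le[OF trivial_limit_sequentially tendsto_const])
    show "(\<lambda>k. f (us k) + vs k \<bullet> (x - us k) - Hm * (norm (x - us k))^2) \<longlonglongrightarrow> f u + v \<bullet> (x - u) - Hm * (norm (x - u))^2"
      by (intro tendsto_intros fu vs us)
    show "\<forall>\<^sub>F k in sequentially. f (us k) + vs k \<bullet> (x - us k) - Hm * (norm (x - us k))^2 \<le> f x"
      using ev by (rule eventually_mono) (use reg_quad rr x in blast)
  qed
  ultimately show ?thesis by blast
qed

lemma f_cont_at: "isCont f xb"
proof -
  have "\<forall>\<^sub>F y in at xb. dist (f y) (f xb) < e" if e: "e > 0" for e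
    unfolding eventually_at
  proof (intro exI[of _ "min r (e / (Gm + 1))"] conjI ballI impI)
    show "min r (e / (Gm + 1)) > 0" using r0 e Gm0 by simp
    fix y assume y: "y \<noteq> xb \<and> dist y xb < min r (e / (Gm + 1))"
    hence yc: "y \<in> cball xb r" by (simp add: dist_commute)
    have xbc: "xb \<in> cball xb r" using r0 by simp
    have "\<bar>f y - f xb\<bar> \<le> Gm * norm (y - xb)" by (rule f_lip[OF yc xbc])
    also have "\<dots> \<le> Gm * (e / (Gm + 1))" using y Gm0 by (intro mult_left_mono) (auto simp: dist_norm)
    also have "\<dots> < e" using e Gm0 by (simp add: field_simps)
    finally show "dist (f y) (f xb) < e" by (simp add: dist_real_def)
  qed
  thus ?thesis unfolding isCont_def by (simp add: tendsto_iff)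
qed

end




lemma lc2_extract:
  fixes f :: "'n::finite vec \<Rightarrow> real"
  assumes lc: "lower_C2 TYPE('t::topological_space) f"
  shows "\<exists>r>0. \<exists>Gm Hm. Gm \<ge> 0 \<and> Hm \<ge> 0 \<and>
    (\<forall>x\<in>cball xb r. \<forall>y\<in>cball xb r. \<bar>f x - f y\<bar> \<le> Gm * norm (x - y)) \<and>
    (\<exists>v. v \<in> reg_subdiff f xb) \<and> isCont f xb \<and>
    (\<forall>u\<in>ball xb r. \<forall>v\<in>lim_subdiff f u. norm v \<le> Gm \<and>
        (\<forall>x\<in>cball xb r. f x \<ge> f u + v \<bullet> (x - u) - Hm * (norm (x - u))^2))"
proof -
  from lc obtain V and T :: "'t set" and ft g H where
    V: "open V" "xb \<in> V" and T: "compact T" "T \<noteq> {}"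
    and der0: "\<forall>t\<in>T. \<forall>x\<in>V. (ft t has_derivative (\<lambda>h. g t x \<bullet> h)) (at x) \<and> (g t has_derivative H t x) (at x)"
    and cg: "continuous_on (T \<times> V) (\<lambda>(t,x). g t x)"
    and cH: "\<forall>h. continuous_on (T \<times> V) (\<lambda>(t,x). H t x h)"
    and mx0: "\<forall>x\<in>V. (\<forall>t\<in>T. ft t x \<le> f x) \<and> (\<exists>t\<in>T. ft t x = f x)"
    using lc[unfolded lower_C2_def, THEN spec[of _ xb]] by (elim exE conjE) blast
  obtain r where r0: "r > 0" and rV: "cball xb r \<subseteq> V" using V open_contains_cball by blast
  have K: "compact (T \<times> cball xb r)" by (intro compact_Times T(1) compact_cball)
  have KV: "T \<times> cball xb r \<subseteq> T \<times> V" using rV by auto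
  obtain Gm where Gm: "\<forall>k\<in>T \<times> cball xb r. norm ((\<lambda>(t,x). g t x) k) \<le> Gm"
    using cpt_bound[OF K continuous_on_subset[OF cg KV]] by blast
  have cH': "continuous_on (T \<times> cball xb r) (\<lambda>k. H (fst k) (snd k) h)" for h
  proof -
    have "continuous_on (T \<times> cball xb r) (\<lambda>(t,x). H t x h)"
      using continuous_on_subset[OF cH[rule_format, of h] KV] .
    thus ?thesis by (simp add: case_prod_beta')
  qed
  have linH: "linear (H (fst k) (snd k))" if "k \<in> T \<times> cball xb r" for k
  proof -
    have "(g (fst k) has_derivative H (fst k) (snd k)) (at (snd k))"
      using der0 that rV by (auto simp: mem_Times_iff)
    thus ?thesis by (simp add: has_derivative_linear)
  qed
  obtain Hm where Hm0: "Hm \<ge> 0" and Hm: "\<forall>k\<in>T \<times> cball xb r. \<forall>h. norm (H (fst k) (snd k) h) \<le> Hm * norm h"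
    using lin_bound[OF K cH' linH] by blast
  have der: "\<And>t x. t \<in> T \<Longrightarrow> x \<in> cball xb r \<Longrightarrow>
     (ft t has_derivative (\<lambda>h. g t x \<bullet> h)) (at x) \<and> (g t has_derivative H t x) (at x)"
    using der0 rV by blast
  have gb: "\<And>t x. t \<in> T \<Longrightarrow> x \<in> cball xb r \<Longrightarrow> norm (g t x) \<le> Gm"
    using Gm by fastforce
  have hb: "\<And>t x h. t \<in> T \<Longrightarrow> x \<in> cball xb r \<Longrightarrow> norm (H t x h) \<le> Hm * norm h"
    using Hm by fastforce
  have mx: "\<And>x. x \<in> cball xb r \<Longrightarrow> (\<forall>t\<in>T. ft t x \<le> f x) \<and> (\<exists>t\<in>T. ft t x = f x)"
    using mx0 rV by blast
  note L = r0 der gb hb mx Hm0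
  show ?thesis
    apply (rule exI[of _ r], rule conjI[OF r0])
    apply (rule exI[of _ Gm], rule exI[of _ Hm])
    using Gm0[OF L] Hm0 f_lip[OF L] reg_nonempty[OF L] f_cont_at[OF L] lim_props[OF L]
    by simp
qed




lemma approx_seq:
  fixes x y :: "nat \<Rightarrow> 'a::real_normed_vector"
  assumes x: "x \<longlonglongrightarrow> l" and d: "\<And>j. norm (y j - x j) \<le> inverse (real (Suc j))"
  shows "y \<longlonglongrightarrow> l"
proof -
  have "(\<lambda>j. y j - x j) \<longlonglongrightarrow> 0"
    by (rule Lim_null_comparison[OF _ LIMSEQ_inverse_real_of_nat]) (intro always_eventually allI d)
  from tendsto_add[OF x this] show ?thesis by simp
qed

lemma lim_approx:
  fixes f :: "'n::finite vec \<Rightarrow> real"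
  assumes v: "v \<in> lim_subdiff f u" and e: "e > 0"
  shows "\<exists>p q. q \<in> reg_subdiff f p \<and> norm (p - u) \<le> e \<and> norm (f p - f u) \<le> e \<and> norm (q - v) \<le> e"
proof -
  from v obtain us vs where us: "us \<longlonglongrightarrow> u" and fu: "(\<lambda>k. f (us k)) \<longlonglongrightarrow> f u"
    and vs: "vs \<longlonglongrightarrow> v" and rr: "\<And>k. vs k \<in> reg_subdiff f (us k)"
    unfolding lim_subdiff_def by blast
  have e1: "\<forall>\<^sub>F k in sequentially. dist (us k) u < e" by (rule tendstoD[OF us e])
  have e2: "\<forall>\<^sub>F k in sequentially. dist (f (us k)) (f u) < e" by (rule tendstoD[OF fu e])
  have e3: "\<forall>\<^sub>F k in sequentially. dist (vs k) v < e" by (rule tendstoD[OF vs e])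
  have "\<forall>\<^sub>F k in sequentially. dist (us k) u < e \<and> dist (f (us k)) (f u) < e \<and> dist (vs k) v < e"
    by (rule eventually_conj[OF e1 eventually_conj[OF e2 e3]])
  then obtain N where N: "\<And>n. n \<ge> N \<Longrightarrow> dist (us n) u < e \<and> dist (f (us n)) (f u) < e \<and> dist (vs n) v < e"
    unfolding eventually_sequentially by blast
  define k where "k = N"
  have "dist (us k) u < e \<and> dist (f (us k)) (f u) < e \<and> dist (vs k) v < e" using N[of N] by (simp add: k_def)
  hence "norm (us k - u) \<le> e \<and> norm (f (us k) - f u) \<le> e \<and> norm (vs k - v) \<le> e"
    by (simp add: dist_norm)
  thus ?thesis using rr[of k] by blast
qed

lemma G_closed:
  fixes f :: "'n::finite vec \<Rightarrow> real"
  assumes cont: "continuous_on UNIV f"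
  shows "closed (gph (lim_subdiff f))"
  unfolding closed_sequential_limits
proof (intro allI impI, elim conjE)
  fix s :: "nat \<Rightarrow> 'n vec \<times> 'n vec" and l
  assume sG: "\<forall>n. s n \<in> gph (lim_subdiff f)" and sl: "s \<longlonglongrightarrow> l"
  define a where "a j = fst (s j)" for j
  define b where "b j = snd (s j)" for j
  have ab: "b j \<in> lim_subdiff f (a j)" for j
  proof -
    have "s j \<in> gph (lim_subdiff f)" using sG by blast
    thus ?thesis by (cases "s j") (simp add: gph_def a_def b_def)
  qed
  have "\<forall>j. \<exists>pq. snd pq \<in> reg_subdiff f (fst pq) \<and> norm (fst pq - a j) \<le> inverse (real (Suc j)) \<and>
      norm (f (fst pq) - f (a j)) \<le> inverse (real (Suc j)) \<and> norm (snd pq - b j) \<le> inverse (real (Suc j))"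
  proof
    fix j
    obtain p q where "q \<in> reg_subdiff f p \<and> norm (p - a j) \<le> inverse (real (Suc j)) \<and>
      norm (f p - f (a j)) \<le> inverse (real (Suc j)) \<and> norm (q - b j) \<le> inverse (real (Suc j))"
      using lim_approx[OF ab, of "inverse (real (Suc j))" j] by auto
    thus "\<exists>pq. snd pq \<in> reg_subdiff f (fst pq) \<and> norm (fst pq - a j) \<le> inverse (real (Suc j)) \<and>
      norm (f (fst pq) - f (a j)) \<le> inverse (real (Suc j)) \<and> norm (snd pq - b j) \<le> inverse (real (Suc j))"
      by (intro exI[of _ "(p, q)"]) simp
  qed
  then obtain PQ where PQ0: "\<forall>j. snd (PQ j) \<in> reg_subdiff f (fst (PQ j)) \<and> norm (fst (PQ j) - a j) \<le> inverse (real (Suc j)) \<and>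
      norm (f (fst (PQ j)) - f (a j)) \<le> inverse (real (Suc j)) \<and> norm (snd (PQ j) - b j) \<le> inverse (real (Suc j))"
    using choice[of "\<lambda>j pq. snd pq \<in> reg_subdiff f (fst pq) \<and> norm (fst pq - a j) \<le> inverse (real (Suc j)) \<and>
      norm (f (fst pq) - f (a j)) \<le> inverse (real (Suc j)) \<and> norm (snd pq - b j) \<le> inverse (real (Suc j))"] by blast
  define P where "P j = fst (PQ j)" for j
  define Q where "Q j = snd (PQ j)" for j
  have PQ: "\<And>j. Q j \<in> reg_subdiff f (P j)"
    and P: "\<And>j. norm (P j - a j) \<le> inverse (real (Suc j))"
    and FP: "\<And>j. norm (f (P j) - f (a j)) \<le> inverse (real (Suc j))"
    and Q: "\<And>j. norm (Q j - b j) \<le> inverse (real (Suc j))" using PQ0 by (auto simp: P_def Q_def)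
  have a: "a \<longlonglongrightarrow> fst l" unfolding a_def by (intro tendsto_intros sl)
  have b: "b \<longlonglongrightarrow> snd l" unfolding b_def by (intro tendsto_intros sl)
  have "isCont f (fst l)" using cont by (simp add: continuous_on_eq_continuous_at)
  hence fa: "(\<lambda>j. f (a j)) \<longlonglongrightarrow> f (fst l)" by (rule isCont_tendsto_compose[OF _ a])
  have "P \<longlonglongrightarrow> fst l" by (rule approx_seq[OF a P])
  moreover have "(\<lambda>j. f (P j)) \<longlonglongrightarrow> f (fst l)" by (rule approx_seq[OF fa FP])
  moreover have "Q \<longlonglongrightarrow> snd l" by (rule approx_seq[OF b Q])
  ultimately have "snd l \<in> lim_subdiff f (fst l)" unfolding lim_subdiff_def using PQ by blast
  thus "l \<in> gph (lim_subdiff f)" by (cases l) (simp add: gph_def)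
qed




context
  fixes f :: "'n::finite vec \<Rightarrow> real"
  assumes lc: "lower_C2 TYPE('t::topological_space) f"
begin

lemma lc2_cont: "continuous_on UNIV f"
proof (rule continuous_at_imp_continuous_on, intro ballI)
  fix x show "isCont f x" using lc2_extract[OF lc, of x] by blast
qed

lemma lc2_nonempty: "\<exists>v. v \<in> lim_subdiff f u"
  using lc2_extract[OF lc, of u] reg_in_lim by blast

lemma lc2_semi:
  assumes v: "v \<in> lim_subdiff f u"
  shows "\<exists>r>0. \<exists>Hm. \<forall>x\<in>ball u r. f x \<ge> f u + v \<bullet> (x - u) - Hm * (norm (x - u))^2"
proof -
  obtain r Gm Hm where r: "r > 0" and L: "\<forall>u'\<in>ball u r. \<forall>v\<in>lim_subdiff f u'. norm v \<le> Gm \<and>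
        (\<forall>x\<in>cball u r. f x \<ge> f u' + v \<bullet> (x - u') - Hm * (norm (x - u'))^2)"
    using lc2_extract[OF lc, of u] by blast
  have "u \<in> ball u r" using r by simp
  with L v have "\<forall>x\<in>cball u r. f x \<ge> f u + v \<bullet> (x - u) - Hm * (norm (x - u))^2" by blast
  thus ?thesis using r by (intro exI[of _ r] conjI exI[of _ Hm]) auto
qed

lemma lc2_bound: "\<exists>Vm. \<forall>u\<in>cball m R. \<forall>v\<in>lim_subdiff f u. norm v \<le> Vm"
proof -
  have "\<forall>x. \<exists>p. fst p > 0 \<and> (\<forall>u\<in>ball x (fst p). \<forall>v\<in>lim_subdiff f u. norm v \<le> snd p)"
  proof
    fix x
    obtain r Gm where "r > 0" "\<forall>u\<in>ball x r. \<forall>v\<in>lim_subdiff f u. norm v \<le> Gm"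
      using lc2_extract[OF lc, of x] by blast
    thus "\<exists>p. fst p > 0 \<and> (\<forall>u\<in>ball x (fst p). \<forall>v\<in>lim_subdiff f u. norm v \<le> snd p)"
      by (intro exI[of _ "(r, Gm)"]) simp
  qed
  then obtain p where p: "\<And>x. fst (p x) > 0" "\<And>x u v. u \<in> ball x (fst (p x)) \<Longrightarrow> v \<in> lim_subdiff f u \<Longrightarrow> norm v \<le> snd (p x)"
    using choice[of "\<lambda>x p. fst p > 0 \<and> (\<forall>u\<in>ball x (fst p). \<forall>v\<in>lim_subdiff f u. norm v \<le> snd p)"] by blast
  have cov: "cball m R \<subseteq> \<Union> ((\<lambda>x. ball x (fst (p x))) ` cball m R)"
  proof
    fix u assume "u \<in> cball m R"
    moreover have "u \<in> ball u (fst (p u))" using p(1)[of u] by simp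
    ultimately show "u \<in> \<Union> ((\<lambda>x. ball x (fst (p x))) ` cball m R)" by blast
  qed
  obtain C where C: "C \<subseteq> cball m R" "finite C" "cball m R \<subseteq> \<Union> ((\<lambda>x. ball x (fst (p x))) ` C)"
    using compactE_image[OF compact_cball, of "cball m R" "\<lambda>x. ball x (fst (p x))" m R] cov by blast
  show ?thesis
  proof (intro exI[of _ "\<Sum>x\<in>C. \<bar>snd (p x)\<bar>"] ballI)
    fix u v assume u: "u \<in> cball m R" and v: "v \<in> lim_subdiff f u"
    then obtain x where x: "x \<in> C" "u \<in> ball x (fst (p x))" using C(3) by blast
    have "norm v \<le> snd (p x)" by (rule p(2)[OF x(2) v])
    also have "\<dots> \<le> \<bar>snd (p x)\<bar>" by simp
    also have "\<dots> \<le> (\<Sum>x\<in>C. \<bar>snd (p x)\<bar>)" by (rule member_le_sum[OF x(1) _ C(2)]) simp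
    finally show "norm v \<le> (\<Sum>x\<in>C. \<bar>snd (p x)\<bar>)" .
  qed
qed

end




lemma beta_deriv:
  fixes x m :: "'n::finite vec"
  shows "((\<lambda>u. A * ((u - m) \<bullet> (u - m))^N) has_derivative (\<lambda>h. A * (real N * ((x-m)\<bullet>(x-m))^(N-1) * (2*((x-m)\<bullet>h))))) (at x)"
  by (auto intro!: derivative_eq_intros simp: inner_commute algebra_simps)

lemma subgrad_conv:
  fixes f :: "'n::finite vec \<Rightarrow> real"
  assumes ne: "\<And>u. \<exists>v. v \<in> lim_subdiff f u"
    and sg: "\<And>u v x. v \<in> lim_subdiff f u \<Longrightarrow> f x \<ge> f u + v \<bullet> (x - u)"
  shows "convex_on UNIV f"
proof (rule convex_onI[OF _ convex_UNIV])
  fix s :: real and x y :: "'n vec"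
  define w where "w = (1 - s) *\<^sub>R x + s *\<^sub>R y"
  assume s: "0 < s" "s < 1"
  obtain v where v: "v \<in> lim_subdiff f w" using ne by blast
  have hx: "f x \<ge> f w + v \<bullet> (x - w)" and hy: "f y \<ge> f w + v \<bullet> (y - w)" using sg[OF v] by auto
  have "(1 - s) * (v \<bullet> (x - w)) + s * (v \<bullet> (y - w)) = v \<bullet> ((1 - s) *\<^sub>R (x - w) + s *\<^sub>R (y - w))"
    by (simp add: inner_add_right)
  also have "(1 - s) *\<^sub>R (x - w) + s *\<^sub>R (y - w) = 0" by (simp add: w_def algebra_simps)
  finally have lin: "(1 - s) * (v \<bullet> (x - w)) + s * (v \<bullet> (y - w)) = 0" by simp
  have "(1 - s) * f x + s * f y \<ge> (1 - s) * (f w + v \<bullet> (x - w)) + s * (f w + v \<bullet> (y - w))"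
    using hx hy s by (intro add_mono mult_left_mono) auto
  also have "(1 - s) * (f w + v \<bullet> (x - w)) + s * (f w + v \<bullet> (y - w)) = f w + ((1 - s) * (v \<bullet> (x - w)) + s * (v \<bullet> (y - w)))"
    by (simp add: algebra_simps)
  finally have "f w \<le> (1 - s) * f x + s * f y" unfolding lin by simp
  from this[unfolded w_def] show "f ((1 - s) *\<^sub>R x + s *\<^sub>R y) \<le> (1 - s) * f x + s * f y" .
qed




lemma max_normal:
  fixes f :: "'n::finite vec \<Rightarrow> real" and \<beta> :: "'n vec \<Rightarrow> real"
  assumes maxloc: "\<exists>\<rho>>0. \<forall>u v. (u, v) \<in> gph (lim_subdiff f) \<longrightarrow> norm (u - ub) < \<rho> \<longrightarrow>
        f u + v \<bullet> (m - u) - \<beta> u \<le> f ub + vb \<bullet> (m - ub) - \<beta> ub"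
   and d\<beta>: "(\<beta> has_derivative (\<lambda>h. - (z \<bullet> h))) (at ub)"
   and semi: "\<exists>r>0. \<exists>Hm. \<forall>x\<in>ball ub r. f x \<ge> f ub + vb \<bullet> (x - ub) - Hm * (norm (x - ub))^2"
  shows "z \<in> combined_second_subdiff f ub vb (ub - m)"
proof -
  obtain \<rho> where \<rho>: "\<rho> > 0" and mx: "\<And>u v. (u, v) \<in> gph (lim_subdiff f) \<Longrightarrow> norm (u - ub) < \<rho> \<Longrightarrow>
        f u + v \<bullet> (m - u) - \<beta> u \<le> f ub + vb \<bullet> (m - ub) - \<beta> ub" using maxloc by blast
  obtain r Hm0 where r: "r > 0" and sm0: "\<And>x. x \<in> ball ub r \<Longrightarrow> f x \<ge> f ub + vb \<bullet> (x - ub) - Hm0 * (norm (x - ub))^2"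
    using semi by blast
  define Hm where "Hm = \<bar>Hm0\<bar>"
  have Hm: "Hm \<ge> 0" by (simp add: Hm_def)
  have sm: "f x \<ge> f ub + vb \<bullet> (x - ub) - Hm * (norm (x - ub))^2" if x: "x \<in> ball ub r" for x
  proof -
    have "Hm0 * (norm (x - ub))^2 \<le> Hm * (norm (x - ub))^2" unfolding Hm_def by (intro mult_right_mono) auto
    thus ?thesis using sm0[OF x] by linarith
  qed
  have "(z, - (ub - m)) \<in> reg_normal (ub, vb) (gph (lim_subdiff f))"
    unfolding reg_normal_def
  proof (intro CollectI allI impI)
    fix e :: real assume e: "e > 0"
    have e3: "e / 3 > 0" using e by simp
    obtain d1 where d1: "d1 > 0" and dd1: "\<And>y. norm (y - ub) < d1 \<Longrightarrow>
        norm (\<beta> y - \<beta> ub - (- (z \<bullet> (y - ub)))) \<le> e / 3 * norm (y - ub)"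
      using d\<beta>[unfolded has_derivative_within_alt] e3 by blast
    define ea where "ea = e / (3 * (Hm + 1))"
    define eb where "eb = e / 3"
    have ea: "ea > 0" using e Hm by (simp add: ea_def)
    have eb: "eb > 0" using e by (simp add: eb_def)
    define d where "d = min d1 (min r (min \<rho> (min ea eb)))"
    have d0: "d > 0" using d1 r \<rho> ea eb by (simp add: d_def)
    have dle0: "d \<le> d1" "d \<le> r" "d \<le> \<rho>" "d \<le> ea" "d \<le> eb" by (simp_all add: d_def min_le_iff_disj)
    have dle: "d \<le> d1" "d \<le> r" "d \<le> \<rho>" "d \<le> e / (3 * (Hm + 1))" "d \<le> e / 3"
      using dle0 by (simp_all only: ea_def eb_def)
    show "\<forall>\<^sub>F p in at (ub, vb) within gph (lim_subdiff f).
        (z, - (ub - m)) \<bullet> (p - (ub, vb)) \<le> e * norm (p - (ub, vb))"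
      unfolding eventually_at
    proof (intro exI[of _ d] conjI ballI impI)
      show "d > 0" by (rule d0)
      fix p assume pG: "p \<in> gph (lim_subdiff f)" and pd: "p \<noteq> (ub, vb) \<and> dist p (ub, vb) < d"
      obtain u v where p: "p = (u, v)" by (cases p)
      define np where "np = norm (u - ub, v - vb)"
      have pp: "p - (ub, vb) = (u - ub, v - vb)" by (simp add: p)
      have npd: "np < d" using pd by (simp add: dist_norm np_def pp)
      have nu: "norm (u - ub) \<le> np" unfolding np_def by (rule norm_fst_le)
      have nv: "norm (v - vb) \<le> np" unfolding np_def by (rule norm_snd_le)
      have uv: "(u, v) \<in> gph (lim_subdiff f)" using pG p by simp
      have 1: "f u + v \<bullet> (m - u) - \<beta> u \<le> f ub + vb \<bullet> (m - ub) - \<beta> ub"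
        using mx[OF uv] nu npd dle by linarith
      have uball: "u \<in> ball ub r" using nu npd dle by (simp add: dist_norm norm_minus_commute)
      have 2: "f u \<ge> f ub + vb \<bullet> (u - ub) - Hm * (norm (u - ub))^2" by (rule sm[OF uball])
      have 3: "\<beta> u - \<beta> ub + z \<bullet> (u - ub) \<le> e / 3 * norm (u - ub)"
      proof -
        have "norm (u - ub) < d1" using nu npd dle by linarith
        from dd1[OF this] have "\<bar>\<beta> u - \<beta> ub + z \<bullet> (u - ub)\<bar> \<le> e / 3 * norm (u - ub)" by simp
        thus ?thesis by linarith
      qed
      have id: "v \<bullet> (m - u) - vb \<bullet> (m - ub) = (v - vb) \<bullet> (m - ub) - v \<bullet> (u - ub)"
        by (simp add: inner_diff_left inner_diff_right)
      have 4: "(v - vb) \<bullet> (u - ub) \<le> np * np"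
      proof -
        have "(v - vb) \<bullet> (u - ub) \<le> norm (v - vb) * norm (u - ub)" using Cauchy_Schwarz_ineq2[of "v - vb" "u - ub"] by linarith
        also have "\<dots> \<le> np * np" using nu nv by (intro mult_mono) (auto simp: np_def)
        finally show ?thesis .
      qed
      have 5: "np * np \<le> e / 3 * np" using npd dle by (intro mult_right_mono) (auto simp: np_def)
      have 6: "Hm * (norm (u - ub))^2 \<le> e / 3 * norm (u - ub)"
      proof -
        have "Hm * norm (u - ub) \<le> (Hm + 1) * d" using nu npd Hm by (intro mult_mono) auto
        also have "\<dots> \<le> (Hm + 1) * (e / (3 * (Hm + 1)))" using dle Hm by (intro mult_left_mono) auto
        also have "\<dots> = e / 3" using Hm by (simp add: field_simps)
        finally have "Hm * norm (u - ub) \<le> e / 3" .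
        hence "(Hm * norm (u - ub)) * norm (u - ub) \<le> e / 3 * norm (u - ub)" by (intro mult_right_mono) auto
        thus ?thesis by (simp add: power2_eq_square mult.assoc)
      qed
      have "(z, - (ub - m)) \<bullet> (p - (ub, vb)) = z \<bullet> (u - ub) + (v - vb) \<bullet> (m - ub)"
        by (simp add: pp inner_Pair inner_diff_left inner_diff_right inner_commute)
      also have "\<dots> \<le> e / 3 * norm (u - ub) + e / 3 * np + e / 3 * norm (u - ub)"
      proof -
        have id2: "v \<bullet> (u - ub) = vb \<bullet> (u - ub) + (v - vb) \<bullet> (u - ub)" by (simp add: inner_diff_left)
        show ?thesis using 1 2 3 4 5 6 id id2 by linarith
      qed
      also have "\<dots> \<le> e * np"
      proof -
        have "e * norm (u - ub) \<le> e * np" using nu e by (intro mult_left_mono) auto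
        thus ?thesis by linarith
      qed
      finally show "(z, - (ub - m)) \<bullet> (p - (ub, vb)) \<le> e * norm (p - (ub, vb))" by (simp add: pp np_def)
    qed
  qed
  thus ?thesis by (simp add: combined_second_subdiff_def reg_coderiv_def)
qed




lemma iii_conv:
  fixes f :: "'n::finite vec \<Rightarrow> real"
  assumes lc: "lower_C2 TYPE('t::topological_space) f"
   and H: "\<forall>u v w z. v \<in> lim_subdiff f u \<longrightarrow> z \<in> combined_second_subdiff f u v w \<longrightarrow> z \<bullet> w \<ge> 0"
  shows "convex_on UNIV f"
proof (rule ccontr)
  assume nc: "\<not> convex_on UNIV f"
  have "\<exists>u0 v0 m. v0 \<in> lim_subdiff f u0 \<and> f u0 + v0 \<bullet> (m - u0) > f m"
  proof (rule ccontr)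
    assume "\<not> ?thesis"
    hence "\<And>u v x. v \<in> lim_subdiff f u \<Longrightarrow> f x \<ge> f u + v \<bullet> (x - u)" by (meson not_le)
    hence "convex_on UNIV f" by (rule subgrad_conv[OF lc2_nonempty[OF lc]])
    thus False using nc by simp
  qed
  then obtain u0 v0 m where v0: "v0 \<in> lim_subdiff f u0" and gap: "f u0 + v0 \<bullet> (m - u0) > f m" by blast
  define \<delta> where "\<delta> = f u0 + v0 \<bullet> (m - u0) - f m"
  have \<delta>: "\<delta> > 0" using gap by (simp add: \<delta>_def)
  have um: "u0 \<noteq> m" using gap by auto
  define s0 where "s0 = (u0 - m) \<bullet> (u0 - m)"
  have s0: "s0 > 0" using um by (simp add: s0_def)
  define R where "R = 2 * norm (u0 - m)"
  have R: "R > 0" using um by (simp add: R_def)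
  have R2: "R^2 = 4 * s0" by (simp add: R_def s0_def power_mult_distrib power2_norm_eq_inner)
  obtain Fm where Fm: "\<forall>u\<in>cball m R. norm (f u) \<le> Fm"
    using cpt_bound[OF compact_cball continuous_on_subset[OF lc2_cont[OF lc]]] by blast
  obtain Vm where Vm: "\<And>u v. u \<in> cball m R \<Longrightarrow> v \<in> lim_subdiff f u \<Longrightarrow> norm v \<le> Vm"
    using lc2_bound[OF lc, of m R] by blast
  obtain n :: nat where n: "2 * (Fm + \<bar>Vm\<bar> * R - f m) / \<delta> < 4 ^ n"
    using real_arch_pow[of "4::real"] by auto
  define N where "N = Suc n"
  have N4: "(\<delta> / 2) * 4 ^ N > Fm + \<bar>Vm\<bar> * R - f m"
  proof -
    have "(4::real) ^ n \<le> 4 ^ N" by (simp add: N_def)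
    with n have "2 * (Fm + \<bar>Vm\<bar> * R - f m) / \<delta> < 4 ^ N" by linarith
    hence "2 * (Fm + \<bar>Vm\<bar> * R - f m) < 4 ^ N * \<delta>" using \<delta> by (simp add: divide_less_eq)
    thus ?thesis by (simp add: algebra_simps)
  qed
  define A where "A = \<delta> / (2 * s0 ^ N)"
  have A: "A > 0" using \<delta> s0 by (simp add: A_def)
  define \<beta> where "\<beta> u = A * ((u - m) \<bullet> (u - m)) ^ N" for u
  define T where "T p = f (fst p) + snd p \<bullet> (m - fst p) - \<beta> (fst p)" for p
  define S where "S = gph (lim_subdiff f) \<inter> (cball m R \<times> UNIV)"
  have u0S: "(u0, v0) \<in> S"
    using v0 by (simp add: S_def gph_def R_def dist_norm norm_minus_commute)
  have Tu0: "T (u0, v0) = f m + \<delta> / 2"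
  proof -
    have "\<beta> u0 = \<delta> / 2" using s0 by (simp add: \<beta>_def A_def s0_def[symmetric])
    moreover have "T (u0, v0) = f u0 + v0 \<bullet> (m - u0) - \<beta> u0" by (simp add: T_def)
    ultimately show ?thesis unfolding \<delta>_def by (simp add: field_simps)
  qed
  have cS: "compact S"
  proof (subst compact_eq_bounded_closed, intro conjI)
    show "closed S" unfolding S_def
      by (intro closed_Int G_closed[OF lc2_cont[OF lc]] closed_Times closed_cball closed_UNIV)
    show "bounded S" unfolding bounded_iff
    proof (intro exI ballI)
      fix p assume p: "p \<in> S"
      obtain u v where uv: "p = (u, v)" by (cases p)
      have u: "u \<in> cball m R" and v: "v \<in> lim_subdiff f u" using p uv by (auto simp: S_def gph_def)
      have "norm u \<le> norm m + R"
      proof -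
        have "norm u \<le> norm m + norm (u - m)" using norm_triangle_ineq[of m "u - m"] by simp
        thus ?thesis using u by (simp add: dist_norm norm_minus_commute)
      qed
      moreover have "norm v \<le> \<bar>Vm\<bar>" using Vm[OF u v] by linarith
      ultimately show "norm p \<le> norm m + R + \<bar>Vm\<bar>" using norm_Pair_le[of u v] uv by simp
    qed
  qed
  have cT: "continuous_on S T"
  proof -
    have cf: "continuous_on S (\<lambda>p. f (fst p))"
    proof -
      have "continuous_on S (\<lambda>p. fst p)" by (intro continuous_intros)
      thus ?thesis by (rule continuous_on_compose2[OF lc2_cont[OF lc]]) simp
    qed
    show ?thesis unfolding T_def \<beta>_def by (intro continuous_intros cf)
  qed
  obtain pb where pbS: "pb \<in> S" and pbmax: "\<And>p. p \<in> S \<Longrightarrow> T p \<le> T pb"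
    using continuous_attains_sup[OF cS _ cT] u0S by blast
  obtain ub vb where pb: "pb = (ub, vb)" by (cases pb)
  have ubR: "ub \<in> cball m R" and vb: "vb \<in> lim_subdiff f ub" using pbS pb by (auto simp: S_def gph_def)
  have Tge: "T pb \<ge> f m + \<delta> / 2" using pbmax[OF u0S] Tu0 by simp
  have ubin: "norm (ub - m) < R"
  proof (rule ccontr)
    assume "\<not> norm (ub - m) < R"
    hence eq: "norm (ub - m) = R" using ubR by (simp add: dist_norm norm_minus_commute)
    have "(ub - m) \<bullet> (ub - m) = 4 * s0" using eq R2 by (simp add: power2_norm_eq_inner[symmetric])
    hence b: "\<beta> ub = (\<delta> / 2) * 4 ^ N" using s0 by (simp add: \<beta>_def A_def power_mult_distrib)
    have f1: "f ub \<le> Fm"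
    proof -
      have "\<bar>f ub\<bar> \<le> Fm" using Fm ubR by auto
      thus ?thesis by linarith
    qed
    have "vb \<bullet> (m - ub) \<le> norm vb * norm (m - ub)" using Cauchy_Schwarz_ineq2[of vb "m - ub"] by linarith
    also have "\<dots> \<le> \<bar>Vm\<bar> * R" using Vm[OF ubR vb] eq by (intro mult_mono) (auto simp: norm_minus_commute)
    finally have "T pb \<le> Fm + \<bar>Vm\<bar> * R - (\<delta> / 2) * 4 ^ N" using f1 b by (simp add: T_def pb)
    thus False using Tge N4 \<delta> by linarith
  qed
  have ubm: "ub \<noteq> m"
  proof
    assume "ub = m"
    hence "T pb = f m" by (simp add: T_def pb \<beta>_def N_def)
    thus False using Tge \<delta> by linarith
  qed
  define s1 where "s1 = (ub - m) \<bullet> (ub - m)"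
  have s1: "s1 > 0" using ubm by (simp add: s1_def)
  define c where "c = A * real N * s1 ^ (N - 1) * 2"
  have c: "c > 0" using A s1 by (simp add: c_def N_def)
  define z where "z = - c *\<^sub>R (ub - m)"
  have d\<beta>: "(\<beta> has_derivative (\<lambda>h. - (z \<bullet> h))) (at ub)"
  proof -
    have "(\<lambda>h. A * (real N * ((ub - m) \<bullet> (ub - m)) ^ (N - 1) * (2 * ((ub - m) \<bullet> h)))) = (\<lambda>h. - (z \<bullet> h))"
      by (rule ext) (simp add: z_def c_def s1_def)
    with beta_deriv[of A m N ub] show ?thesis unfolding \<beta>_def by simp
  qed
  have maxloc: "\<exists>\<rho>>0. \<forall>u v. (u, v) \<in> gph (lim_subdiff f) \<longrightarrow> norm (u - ub) < \<rho> \<longrightarrow>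
        f u + v \<bullet> (m - u) - \<beta> u \<le> f ub + vb \<bullet> (m - ub) - \<beta> ub"
  proof (intro exI[of _ "R - norm (ub - m)"] conjI allI impI)
    show "R - norm (ub - m) > 0" using ubin by simp
    fix u v assume G: "(u, v) \<in> gph (lim_subdiff f)" and d: "norm (u - ub) < R - norm (ub - m)"
    have "norm (u - m) \<le> norm (u - ub) + norm (ub - m)" using norm_triangle_ineq[of "u - ub" "ub - m"] by simp
    hence "(u, v) \<in> S" using G d by (simp add: S_def dist_norm norm_minus_commute)
    from pbmax[OF this] show "f u + v \<bullet> (m - u) - \<beta> u \<le> f ub + vb \<bullet> (m - ub) - \<beta> ub"
      by (simp add: T_def pb)
  qed
  have "z \<in> combined_second_subdiff f ub vb (ub - m)"
    by (rule max_normal[OF maxloc d\<beta> lc2_semi[OF lc vb]])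
  with H vb have "z \<bullet> (ub - m) \<ge> 0" by blast
  moreover have "z \<bullet> (ub - m) = - c * s1" by (simp add: z_def s1_def)
  moreover have "c * s1 > 0" using c s1 by simp
  ultimately show False by linarith
qed



theorem theorem4p1:
  fixes f :: "real ^ 'n \<Rightarrow> real"
  assumes "lower_C2 TYPE('t::topological_space) f"
  shows "(convex_on UNIV f \<longleftrightarrow>
           (\<forall>u v w z. v \<in> lim_subdiff f u \<longrightarrow> z \<in> second_subdiff f u v w \<longrightarrow> z \<bullet> w \<ge> 0))
       \<and> (convex_on UNIV f \<longleftrightarrow>
           (\<forall>u v w z. v \<in> lim_subdiff f u \<longrightarrow> z \<in> combined_second_subdiff f u v w \<longrightarrow> z \<bullet> w \<ge> 0))"
proof -
  have CII: "(\<forall>u v w z. v \<in> lim_subdiff f u \<longrightarrow> z \<in> second_subdiff f u v w \<longrightarrow> z \<bullet> w \<ge> 0)"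
    if "convex_on UNIV f" using conv_psd_lim[OF that] by blast
  have IIIII: "(\<forall>u v w z. v \<in> lim_subdiff f u \<longrightarrow> z \<in> combined_second_subdiff f u v w \<longrightarrow> z \<bullet> w \<ge> 0)"
    if "\<forall>u v w z. v \<in> lim_subdiff f u \<longrightarrow> z \<in> second_subdiff f u v w \<longrightarrow> z \<bullet> w \<ge> 0"
    using that comb_in_second by blast
  have IIIC: "convex_on UNIV f"
    if "\<forall>u v w z. v \<in> lim_subdiff f u \<longrightarrow> z \<in> combined_second_subdiff f u v w \<longrightarrow> z \<bullet> w \<ge> 0"
    by (rule iii_conv[OF assms that])
  show ?thesis using CII IIIII IIIC by blast
qed

end
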